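(* Let $L$ be an $n\times n$ nonsingular M-matrix with integer entries. If $c\in\mathbb{Z}^n$ is a critical configuration of $L$, then $D^L-c$ is $z$-superstable with respect to $L$.
   Context: A Z-matrix is a square real matrix whose off-diagonal entries are all $\le 0$. A nonsingular M-matrix is a Z-matrix $L$ that is invertible with $L^{-1}$ having all entries nonnegative (its diagonal entries are then positive). Vector inequalities are entrywise; $e_i$ is the $i$th standard basis vector. A vector $f\in\mathbb{Z}^n$ with $f\ge0$ is $z$-superstable if for every $z\in\mathbb{Z}^n$ with $z\ge0$, $z\ne0$, there is $i$ with $f_i-(Lz)_i<0$. $D^L\in\mathbb{Z}^n$ is defined by $D^L_i=L_{ii}-1$. A vector $c\in\mathbb{Z}^n$ is stable if $c_i<L_{ii}$ for all $i$. A vector $c\in\mathbb{Z}^n$ is a critical configuration if it is stable and there exist $g\in\mathbb{Z}^n$ with $g_i\ge L_{ii}$ for all $i$ and indices $i_1,\dots,i_k$ such that $c=g-\sum_{j=1}^kLe_{i_j}$ and, writing $g^\ell=g-\sum_{j=1}^\ell Le_{i_j}$ ($g^0=g$), one has $g^\ell_{i_{\ell+1}}\ge L_{i_{\ell+1}i_{\ell+1}}$ for all $0\le\ell<k$. *)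

theory Defs
  imports "HOL-Analysis.Analysis"
begin

definition Z_matrix :: "int ^'n ^'n \<Rightarrow> bool" where
  "Z_matrix L \<longleftrightarrow> (\<forall>i j. i \<noteq> j \<longrightarrow> L $ i $ j \<le> 0)"

definition real_mat :: "int ^'n ^'n \<Rightarrow> real ^'n ^'n" where
  "real_mat L = (\<chi> i j. real_of_int (L $ i $ j))"

definition nonsingular_M_matrix :: "int ^'n::finite ^'n \<Rightarrow> bool" where
  "nonsingular_M_matrix L \<longleftrightarrow> Z_matrix L \<and> invertible (real_mat L)
     \<and> (\<forall>i j. matrix_inv (real_mat L) $ i $ j \<ge> 0)"

definition unitv :: "'n::finite \<Rightarrow> int ^'n" where
  "unitv i = (\<chi> j. if j = i then 1 else 0)"

definition D_L :: "int ^'n ^'n \<Rightarrow> int ^'n" where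
  "D_L L = (\<chi> i. L $ i $ i - 1)"

definition z_superstable :: "int ^'n::finite ^'n \<Rightarrow> int ^'n \<Rightarrow> bool" where
  "z_superstable L f \<longleftrightarrow> (\<forall>i. f $ i \<ge> 0) \<and>
     (\<forall>z::int^'n. (\<forall>i. z $ i \<ge> 0) \<and> z \<noteq> 0 \<longrightarrow> (\<exists>i. f $ i - (L *v z) $ i < 0))"

definition stable :: "int ^'n ^'n \<Rightarrow> int ^'n \<Rightarrow> bool" where
  "stable L c \<longleftrightarrow> (\<forall>i. c $ i < L $ i $ i)"

definition fire_seq :: "int ^'n::finite ^'n \<Rightarrow> int ^'n \<Rightarrow> 'n list \<Rightarrow> nat \<Rightarrow> int ^'n" where
  "fire_seq L g is l = g - (\<Sum>j<l. L *v unitv (is ! j))"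

definition critical :: "int ^'n::finite ^'n \<Rightarrow> int ^'n \<Rightarrow> bool" where
  "critical L c \<longleftrightarrow> stable L c \<and>
     (\<exists>g is. (\<forall>i. g $ i \<ge> L $ i $ i) \<and>
        c = fire_seq L g is (length is) \<and>
        (\<forall>l < length is. fire_seq L g is l $ (is ! l) \<ge> L $ (is ! l) $ (is ! l)))"

end

theory Submission
  imports Defs
begin

lemma minv_left:
  fixes A :: "real ^'n::finite ^'n"
  assumes "invertible A"
  shows "matrix_inv A ** A = mat 1"
  using someI_ex[OF assms[unfolded invertible_def]] unfolding matrix_inv_def by blast

lemma real_mat_mult:
  "real_mat L *v (\<chi> i. real_of_int (y $ i)) = (\<chi> i. real_of_int ((L *v y) $ i))"
  by (simp add: real_mat_def matrix_vector_mult_def vec_eq_iff)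

lemma Lunit: "(L *v unitv u) $ i = (L $ i $ u :: int)"
  by (simp add: matrix_vector_mult_def unitv_def if_distrib cong: if_cong)

lemma nonneg_sol:
  fixes L :: "int ^'n::finite ^'n"
  assumes M: "nonsingular_M_matrix L" and pos: "\<forall>i. (L *v y) $ i \<ge> 0"
  shows "y $ i \<ge> 0"
proof -
  define A where "A = real_mat L"
  define ry where "ry = (\<chi> i. real_of_int (y $ i))"
  have inv: "invertible A" and nn: "\<forall>i j. matrix_inv A $ i $ j \<ge> 0"
    using M unfolding nonsingular_M_matrix_def A_def by auto
  have "ry = matrix_inv A *v (A *v ry)"
    by (simp add: matrix_vector_mul_assoc minv_left[OF inv])
  also have "A *v ry = (\<chi> i. real_of_int ((L *v y) $ i))"
    unfolding A_def ry_def by (rule real_mat_mult)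
  finally have "ry $ i = (\<Sum>j\<in>UNIV. matrix_inv A $ i $ j * real_of_int ((L *v y) $ j))"
    by (simp add: matrix_vector_mult_def)
  also have "\<dots> \<ge> 0"
    by (rule sum_nonneg) (use nn pos in auto)
  finally show ?thesis by (simp add: ry_def)
qed

theorem mainTheorem13:
  fixes L :: "int ^'n::finite ^'n" and c :: "int ^'n"
  assumes "nonsingular_M_matrix L"
    and "critical L c"
  shows "z_superstable L (D_L L - c)"
proof -
  have Z: "\<And>i j. i \<noteq> j \<Longrightarrow> L $ i $ j \<le> 0"
    using assms(1) unfolding nonsingular_M_matrix_def Z_matrix_def by auto
  have st: "\<And>i. c $ i < L $ i $ i" using assms(2) unfolding critical_def stable_def by auto
  obtain g "is" where g: "\<forall>i. g $ i \<ge> L $ i $ i" and c: "c = fire_seq L g is (length is)"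
    and fire: "\<forall>l < length is. fire_seq L g is l $ (is ! l) \<ge> L $ (is ! l) $ (is ! l)"
    using assms(2) unfolding critical_def by blast
  define K :: "nat \<Rightarrow> int^'n" where "K l = (\<Sum>j<l. unitv (is ! j))" for l
  have FK: "fire_seq L g is l = g - L *v K l" for l
  proof -
    have "(\<Sum>j<l. L *v unitv (is ! j)) = L *v K l"
      unfolding K_def by (induction l) (simp_all add: matrix_vector_right_distrib)
    thus ?thesis unfolding fire_seq_def by simp
  qed
  have KS: "K (Suc l) = K l + unitv (is ! l)" for l unfolding K_def by simp
  define x where "x = K (length is)"
  show ?thesis unfolding z_superstable_def
  proof (intro conjI allI impI)
    fix i show "0 \<le> (D_L L - c) $ i" using st[of i] by (simp add: D_L_def)
  next
    fix z :: "int^'n"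
    assume zz: "(\<forall>i. 0 \<le> z $ i) \<and> z \<noteq> 0"
    show "\<exists>i. (D_L L - c) $ i - (L *v z) $ i < 0"
    proof (rule ccontr)
      assume nt: "\<not> ?thesis"
      hence le: "\<And>i. c $ i + (L *v z) $ i \<le> L $ i $ i - 1"
      proof -
        fix i have "\<not> ((D_L L - c) $ i - (L *v z) $ i < 0)" using nt by blast
        thus "c $ i + (L *v z) $ i \<le> L $ i $ i - 1" by (simp add: D_L_def)
      qed
      define y where "y = x - z"
      have cx: "c = g - L *v x" using c FK x_def by simp
      have "(L *v y) $ i \<ge> 1" for i
      proof -
        have "(L *v y) $ i = g $ i - c $ i - (L *v z) $ i"
          by (simp add: y_def cx matrix_vector_mult_diff_distrib)
        thus ?thesis using le[of i] g by (smt (verit))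
      qed
      hence ynn: "\<And>i. y $ i \<ge> 0" using nonneg_sol[OF assms(1)] by (meson order.trans zero_le_one)
      have ind: "t \<le> length is \<Longrightarrow> (\<forall>t'<t. K t' $ (is!t') < y $ (is!t')) \<Longrightarrow> (\<forall>u. K t $ u \<le> y $ u)" for t
      proof (induction t)
        case 0 thus ?case using ynn by (simp add: K_def)
      next
        case (Suc t)
        hence IH: "\<forall>u. K t $ u \<le> y $ u" and lt: "K t $ (is!t) < y $ (is!t)" by auto
        show ?case
        proof
          fix u show "K (Suc t) $ u \<le> y $ u"
            using IH lt by (cases "u = is ! t") (auto simp: KS unitv_def)
        qed
      qed
      have "\<exists>t<length is. K t $ (is!t) \<ge> y $ (is!t)"
      proof (rule ccontr)
        assume "\<not> ?thesis"
        hence "\<forall>u. x $ u \<le> y $ u" using ind[of "length is"] by (auto simp: x_def not_le)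
        hence "\<forall>u. z $ u \<le> 0" by (simp add: y_def)
        hence "z = 0" using zz by (simp add: vec_eq_iff order_antisym)
        thus False using zz by simp
      qed
      then obtain t where t: "t < length is" "K t $ (is!t) \<ge> y $ (is!t)"
        and tmin: "\<forall>t'<t. \<not> (K t' $ (is!t') \<ge> y $ (is!t'))"
        using exists_least_iff[where P = "\<lambda>t. t < length is \<and> K t $ (is!t) \<ge> y $ (is!t)"]
        by (metis (no_types, lifting) order.strict_trans)
      have Kle: "\<forall>u. K t $ u \<le> y $ u" using ind[of t] t tmin by (auto simp: not_le)
      define v where "v = is ! t"
      have eqv: "K t $ v = y $ v" using Kle t by (simp add: v_def order_antisym)
      have fv: "g $ v - (L *v K t) $ v \<ge> L $ v $ v" using fire t FK by (simp add: v_def)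
      have cv: "c $ v + (L *v z) $ v = g $ v - (L *v y) $ v"
        by (simp add: y_def cx matrix_vector_mult_diff_distrib)
      have "(L *v y) $ v - (L *v K t) $ v = (\<Sum>u\<in>UNIV. L $ v $ u * (y $ u - K t $ u))"
        by (simp add: matrix_vector_mult_def sum_subtractf right_diff_distrib)
      also have "\<dots> \<le> 0"
      proof (rule sum_nonpos)
        fix u show "L $ v $ u * (y $ u - K t $ u) \<le> 0"
        proof (cases "u = v")
          case True thus ?thesis using eqv by simp
        next
          case False thus ?thesis using Z[of v u] Kle
            by (simp add: mult_nonpos_nonneg)
        qed
      qed
      finally show False using le[of v] cv fv by linarith
    qed
  qed
qed

end
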